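(* Let $a,b$ be positive integers and let $d=\gcd(a,b)$. If $a$ divides $b$ or $b$ divides $a$, then $\Gamma(a,b)=1$. Otherwise: (1) if $a/d$ is odd, then $\Gamma(a,b)=1$ if and only if $\Theta(b,a)$ is odd; (2) if $a/d$ is even, then $\Gamma(a,b)=1$ if and only if $\Theta(a,b)$ is odd.
   Context: For relatively prime positive integers $p,q$, exactly one of the equations $px+qy=\frac{(p-1)(q-1)}{2}$ (Equation 1) and $px+qy+1=\frac{(p-1)(q-1)}{2}$ (Equation 2) has a solution in nonnegative integers $(x,y)$. For positive integers $a,b$ with $d=\gcd(a,b)$, $\Gamma(a,b)=1$ if Equation 1 with $(p,q)=(a/d,b/d)$ has a nonnegative integer solution, and $\Gamma(a,b)=2$ otherwise. For positive integers $a,b$ with $d=\gcd(a,b)$ and $b/d>1$, $\Theta(a,b)$ denotes the unique integer with $0<\Theta(a,b)<b/d$ and $(a/d)\Theta(a,b)\equiv 1 \pmod{b/d}$. *)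

theory Defs
  imports "HOL-Number_Theory.Number_Theory"
begin

text \<open>Equation 1 for coprime p, q: p x + q y = (p-1)(q-1)/2 with x, y nonnegative integers.
  Note (p-1)(q-1) is even for coprime p, q, so the division is exact.\<close>
definition eq1_solvable :: "nat \<Rightarrow> nat \<Rightarrow> bool" where
  "eq1_solvable p q \<longleftrightarrow> (\<exists>x y :: nat. p * x + q * y = ((p - 1) * (q - 1)) div 2)"

definition Gamma :: "nat \<Rightarrow> nat \<Rightarrow> nat" where
  "Gamma a b = (if eq1_solvable (a div gcd a b) (b div gcd a b) then 1 else 2)"

text \<open>Theta a b: the unique integer t with 0 < t < b/d and (a/d) t = 1 mod (b/d);
  meaningful when b/d > 1.\<close>
definition Theta :: "nat \<Rightarrow> nat \<Rightarrow> nat" where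
  "Theta a b = (THE t :: nat. 0 < t \<and> t < b div gcd a b \<and>
      [(a div gcd a b) * t = 1] (mod (b div gcd a b)))"

end

theory Submission imports Defs begin

lemma alg1:
  fixes P Q T S X Y :: int
  assumes "2 * (P * X + Q * Y) = (P - 1) * (Q - 1)" "Q * T = 1 + P * S"
  shows "2*Y - (T - 1) = P * (T * Q - T - S - 2*T*X - 2*S*Y)"
proof -
  have "2*Y - (T - 1) - P * (T * Q - T - S - 2*T*X - 2*S*Y) =
    T * (2 * (P * X + Q * Y) - (P - 1) * (Q - 1)) - (2*Y+1) * (Q * T - 1 - P * S)"
    by (simp add: algebra_simps)
  thus ?thesis using assms by simp
qed

lemma alg2:
  fixes P Q T S :: int
  assumes "Q * T = 1 + P * S"
  shows "P * (Q - 1 - S) = (P - 1) * (Q - 1) - Q * (T - 1)"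
  using assms by (simp add: algebra_simps)

lemma alg3:
  fixes P Q T S A B :: int
  assumes "2*A = Q - 1 - S" "2*B = T - 1" "Q * T = 1 + P * S"
  shows "2 * (P * A) + 2 * (Q * B) = (P - 1) * (Q - 1)"
proof -
  have "2 * (P * A) + 2 * (Q * B) = P * (2*A) + Q * (2*B)" by simp
  also have "\<dots> = P * (Q - 1 - S) + Q * (T - 1)" using assms by simp
  also have "\<dots> = P*Q - P - P*S + Q*T - Q" by (simp add: algebra_simps)
  also have "\<dots> = (P - 1) * (Q - 1)" using assms(3) by (simp add: algebra_simps)
  finally show ?thesis .
qed

lemma keyL:
  fixes p q t :: nat
  assumes po: "odd p" and t0: "0 < t" and tp: "t < p" and q0: "q > 0"
    and c: "[q * t = 1] (mod p)"
  shows "(\<exists>x y::nat. p*x + q*y = ((p-1)*(q-1)) div 2) \<longleftrightarrow> odd t"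
proof
  have p1: "p > 1" using t0 tp by simp
  have qt1: "q*t \<ge> 1" using t0 q0 by simp
  obtain s where s: "q*t - 1 = p*s" using cong_to_1_nat[OF c] by (auto elim: dvdE)
  have sN: "q*t = 1 + p*s" using le_add_diff_inverse[OF qt1] s by simp
  have sI: "int q * int t = 1 + int p * int s"
  proof -
    from sN have "int (q*t) = int (1 + p*s)" by simp
    thus ?thesis by simp
  qed
  have Nev: "even ((p-1)*(q-1))" using po p1 by simp
  have N2: "2 * int (((p-1)*(q-1)) div 2) = (int p - 1) * (int q - 1)"
  proof -
    have "2 * (((p-1)*(q-1)) div 2) = (p-1)*(q-1)" using Nev by simp
    hence "int (2 * (((p-1)*(q-1)) div 2)) = int ((p-1)*(q-1))" by simp
    thus ?thesis using p1 q0 by (simp add: of_nat_diff)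
  qed
  {
    assume "\<exists>x y::nat. p*x + q*y = ((p-1)*(q-1)) div 2"
    then obtain x y :: nat where xy: "p*x + q*y = ((p-1)*(q-1)) div 2" by blast
    have e: "2 * (int p * x + int q * y) = (int p - 1) * (int q - 1)"
    proof -
      have "int (p*x + q*y) = int (((p-1)*(q-1)) div 2)" using xy by simp
      thus ?thesis using N2 by simp
    qed
    have "int q * (2*int y) \<le> int q * (int p - 1)"
    proof -
      have h: "int q*(2*int y) = (int p - 1)*(int q - 1) - int p*(2*int x)" using e by (simp add: algebra_simps)
      have "0 \<le> int p*(2*int x)" by simp
      hence "int q * (2*int y) \<le> (int p - 1) * (int q - 1)" using h by linarith
      also have "\<dots> \<le> (int p - 1) * int q" using p1 by (intro mult_left_mono) auto
      finally show ?thesis by (simp add: mult.commute)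
    qed
    hence y2: "2*int y < int p" using q0 by (simp add: mult_le_cancel_left)
    have "2*int y - (int t - 1) = int p * (int t * int q - int t - int s - 2*int t*x - 2*int s*y)"
      using alg1[OF e sI] .
    hence dv: "int p dvd (2*int y - (int t - 1))" by simp
    show "odd t"
    proof (rule ccontr)
      assume "\<not> odd t"
      hence te: "even t" by simp
      have "2*int y - (int t - 1) = 0"
      proof (rule ccontr)
        assume ne: "2*int y - (int t - 1) \<noteq> 0"
        have "\<bar>2*int y - (int t - 1)\<bar> < int p" using y2 t0 tp by simp
        moreover have "int p \<le> \<bar>2*int y - (int t - 1)\<bar>"
          using dvd_imp_le_int[OF _ dv] ne by simp
        ultimately show False by simp
      qed
      hence "int t = 2*int y + 1" by simp
      hence "t = 2*y+1" by simp
      thus False using te by simp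
    qed
  }
  assume ot: "odd t"
  have "s < q"
  proof -
    have "p*s < q*t" using sN by simp
    also have "q*t < q*p" using tp q0 by simp
    finally have "p*s < p*q" by (simp add: mult.commute)
    thus ?thesis by simp
  qed
  have ev: "even (q - 1 - s)"
  proof -
    have "int p * (int q - 1 - int s) = (int p - 1) * (int q - 1) - int q * (int t - 1)"
      using alg2[OF sI] .
    moreover have "even (int q * (int t - 1))" using ot by simp
    moreover have "even ((int p - 1) * (int q - 1))" using po by simp
    ultimately have "even (int p * (int q - 1 - int s))" by simp
    hence "even (int q - 1 - int s)" using po by simp
    moreover have "int (q - 1 - s) = int q - 1 - int s" using \<open>s < q\<close> by simp
    ultimately show ?thesis by (metis even_of_nat_iff)
  qed
  have "p*((q-1-s) div 2) + q*((t-1) div 2) = ((p-1)*(q-1)) div 2"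
  proof -
    have a1: "2*int ((q-1-s) div 2) = int q - 1 - int s"
    proof -
      have "2*((q-1-s) div 2) = q-1-s" using ev by simp
      hence "int (2*((q-1-s) div 2)) = int (q-1-s)" by simp
      thus ?thesis using \<open>s<q\<close> by simp
    qed
    have a2: "2*int ((t-1) div 2) = int t - 1"
    proof -
      have "2*((t-1) div 2) = t-1" using ot t0 by simp
      hence "int (2*((t-1) div 2)) = int (t-1)" by simp
      thus ?thesis using t0 by simp
    qed
    have "2 * int (p*((q-1-s) div 2) + q*((t-1) div 2)) = 2 * int (((p-1)*(q-1)) div 2)"
      unfolding N2 using alg3[OF a1 a2 sI] by simp
    hence "int (p*((q-1-s) div 2) + q*((t-1) div 2)) = int (((p-1)*(q-1)) div 2)" by (metis mult_cancel_left zero_neq_numeral)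
    thus ?thesis by (simp only: of_nat_eq_iff)
  qed
  thus "\<exists>x y::nat. p*x + q*y = ((p-1)*(q-1)) div 2" by blast
qed
lemma Theta_aux:
  fixes p q :: nat
  assumes cp: "coprime q p" and p1: "p > 1"
  shows "0 < (THE t. 0 < t \<and> t < p \<and> [q*t = 1] (mod p)) \<and>
         (THE t. 0 < t \<and> t < p \<and> [q*t = 1] (mod p)) < p \<and>
         [q * (THE t. 0 < t \<and> t < p \<and> [q*t = 1] (mod p)) = 1] (mod p)"
proof -
  obtain x where x: "[q*x = Suc 0] (mod p)" using cong_solve_coprime_nat[OF cp] by blast
  have "\<exists>!t. 0 < t \<and> t < p \<and> [q*t = 1] (mod p)"
  proof
    have c1: "[q*(x mod p) = 1] (mod p)"
      using x by (metis One_nat_def cong_def mod_mult_right_eq)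
    have ne: "x mod p \<noteq> 0"
    proof
      assume "x mod p = 0"
      hence "[0 = 1] (mod p)" using c1 by simp
      thus False using p1 by (simp add: cong_def)
    qed
    show "0 < x mod p \<and> x mod p < p \<and> [q*(x mod p) = 1] (mod p)"
      using ne c1 p1 by simp
    fix t assume t: "0 < t \<and> t < p \<and> [q*t = 1] (mod p)"
    hence "[q*t = q*(x mod p)] (mod p)" using c1 by (meson cong_sym cong_trans)
    hence "[t = x mod p] (mod p)" using cong_mult_lcancel_nat[OF cp] by simp
    hence "t mod p = x mod p" by (simp add: cong_def)
    thus "t = x mod p" using t by simp
  qed
  from theI'[OF this] show ?thesis by blast
qed

theorem theorem1p1:
  fixes a b :: nat
  assumes "a > 0" and "b > 0"
  shows "((a dvd b \<or> b dvd a) \<longrightarrow> Gamma a b = 1) \<and>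
         ((\<not> a dvd b \<and> \<not> b dvd a) \<longrightarrow>
            (odd (a div gcd a b) \<longrightarrow> (Gamma a b = 1 \<longleftrightarrow> odd (Theta b a))) \<and>
            (even (a div gcd a b) \<longrightarrow> (Gamma a b = 1 \<longleftrightarrow> odd (Theta a b))))"
proof -
  define d where "d = gcd a b"
  define p where "p = a div d"
  define q where "q = b div d"
  have d0: "d > 0" using assms d_def by simp
  have ap: "a = p * d" unfolding p_def d_def by simp
  have bq: "b = q * d" unfolding q_def d_def by simp
  have p0: "p > 0" using ap assms by (metis gr0I mult_0)
  have q0: "q > 0" using bq assms by (metis gr0I mult_0)
  have cp: "coprime p q" unfolding p_def q_def d_def using assms div_gcd_coprime by blast
  have G: "Gamma a b = 1 \<longleftrightarrow> eq1_solvable p q"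
    unfolding Gamma_def p_def q_def d_def by simp
  have gba: "gcd b a = d" unfolding d_def by (simp add: gcd.commute)
  have adv: "a dvd b \<longleftrightarrow> p = 1"
  proof
    assume "a dvd b" hence "d = a" unfolding d_def by (simp add: gcd_nat.absorb1)
    thus "p = 1" unfolding p_def using assms by simp
  next
    assume "p = 1" hence "a = d" using ap by simp
    thus "a dvd b" unfolding d_def by (metis gcd_dvd2)
  qed
  have bdv: "b dvd a \<longleftrightarrow> q = 1"
  proof
    assume "b dvd a" hence "d = b" unfolding d_def by (simp add: gcd_nat.absorb2)
    thus "q = 1" unfolding q_def using assms by simp
  next
    assume "q = 1" hence "b = d" using bq by simp
    thus "b dvd a" unfolding d_def by (metis gcd_dvd1)
  qed
  have part1: "(a dvd b \<or> b dvd a) \<longrightarrow> Gamma a b = 1"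
  proof
    assume "a dvd b \<or> b dvd a"
    hence "p = 1 \<or> q = 1" using adv bdv by blast
    hence "p*0 + q*0 = ((p-1)*(q-1)) div 2" by auto
    thus "Gamma a b = 1" using G unfolding eq1_solvable_def by blast
  qed
  have part2: "(\<not> a dvd b \<and> \<not> b dvd a) \<longrightarrow>
            (odd (a div gcd a b) \<longrightarrow> (Gamma a b = 1 \<longleftrightarrow> odd (Theta b a))) \<and>
            (even (a div gcd a b) \<longrightarrow> (Gamma a b = 1 \<longleftrightarrow> odd (Theta a b)))"
  proof
    assume nd: "\<not> a dvd b \<and> \<not> b dvd a"
    hence p1: "p > 1" and q1: "q > 1" using adv bdv p0 q0 by auto
    have c1: "odd p \<longrightarrow> (Gamma a b = 1 \<longleftrightarrow> odd (Theta b a))"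
    proof
      assume po: "odd p"
      have T: "Theta b a = (THE t. 0 < t \<and> t < p \<and> [q*t = 1] (mod p))"
        unfolding Theta_def gba p_def q_def ..
      have cqp: "coprime q p" using cp by (simp add: coprime_commute)
      from Theta_aux[OF cqp p1] T have
        "0 < Theta b a" "Theta b a < p" "[q * Theta b a = 1] (mod p)" by simp_all
      from keyL[OF po this(1,2) q0 this(3)] show "Gamma a b = 1 \<longleftrightarrow> odd (Theta b a)"
        using G unfolding eq1_solvable_def by simp
    qed
    have c2: "even p \<longrightarrow> (Gamma a b = 1 \<longleftrightarrow> odd (Theta a b))"
    proof
      assume pe: "even p"
      have qo: "odd q"
      proof
        assume "even q"
        hence "2 dvd gcd p q" using pe by simp
        thus False using cp by simp
      qed
      have T: "Theta a b = (THE t. 0 < t \<and> t < q \<and> [p*t = 1] (mod q))"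
        unfolding Theta_def d_def[symmetric] p_def q_def ..
      from Theta_aux[OF cp q1] T have
        "0 < Theta a b" "Theta a b < q" "[p * Theta a b = 1] (mod q)" by simp_all
      from keyL[OF qo this(1,2) p0 this(3)]
      have "(\<exists>x y::nat. q*x + p*y = ((q-1)*(p-1)) div 2) \<longleftrightarrow> odd (Theta a b)" .
      moreover have "(\<exists>x y::nat. q*x + p*y = ((q-1)*(p-1)) div 2) \<longleftrightarrow> eq1_solvable p q"
        unfolding eq1_solvable_def by (metis add.commute mult.commute)
      ultimately show "Gamma a b = 1 \<longleftrightarrow> odd (Theta a b)" using G by simp
    qed
    show "(odd (a div gcd a b) \<longrightarrow> (Gamma a b = 1 \<longleftrightarrow> odd (Theta b a))) \<and>
            (even (a div gcd a b) \<longrightarrow> (Gamma a b = 1 \<longleftrightarrow> odd (Theta a b)))"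
      using c1 c2 unfolding p_def d_def by simp
  qed
  show ?thesis using part1 part2 by blast
qed

end
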